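(* Let $H$ be a connected graph of order $a \in \mathbb{N}$. Then for every $b \in \mathbb{N}$, \[1 + (a-1)(b-2) \le R_\mathrm{cyc}(H, P_b^\mathrm{mon}) \le 1 + (a-1)(b-1).\]
   Context: All graphs are finite, simple and undirected, and a graph of order $n$ has vertex set $\{0,1,\ldots,n-1\}$; $K_n$ is the complete graph on $\{0,\ldots,n-1\}$. A $2$-edge-coloring of $K_n$ assigns each edge a color in $\{1,2\}$. For a graph $H$ and such a coloring, an embedding of $H$ in color $j$ is an injective map $\varphi\colon V(H)\to V(K_n)$ such that for every edge $uv$ of $H$ the edge $\{\varphi(u),\varphi(v)\}$ has color $j$; it is increasing up to a cyclic permutation if there exists $t\in V(H)$ such that $(\varphi(t),\varphi(t+1),\ldots,\varphi(|H|-1),\varphi(0),\varphi(1),\ldots,\varphi(t-1))$ is an increasing sequence. The cyclic Ramsey number $R_\mathrm{cyc}(H_1,H_2)$ is the smallest $n\in\mathbb{N}$ such that every $2$-edge-coloring of $K_n$ admits an embedding of $H_1$ in color $1$ or of $H_2$ in color $2$ that is increasing up to a cyclic permutation. The monotone path $P_n^\mathrm{mon}$ is the graph of order $n$ in which two vertices are adjacent iff they are consecutive integers. *)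

theory Defs
  imports Main
begin

definition is_graph :: "nat \<Rightarrow> (nat \<Rightarrow> nat \<Rightarrow> bool) \<Rightarrow> bool" where
  "is_graph n E \<longleftrightarrow> (\<forall>u v. E u v \<longrightarrow> u < n \<and> v < n \<and> u \<noteq> v \<and> E v u)"

definition connected_graph :: "nat \<Rightarrow> (nat \<Rightarrow> nat \<Rightarrow> bool) \<Rightarrow> bool" where
  "connected_graph n E \<longleftrightarrow> is_graph n E \<and> 0 < n \<and>
     (\<forall>u v. u < n \<longrightarrow> v < n \<longrightarrow> E\<^sup>*\<^sup>* u v)"

definition mon_path :: "nat \<Rightarrow> nat \<Rightarrow> nat \<Rightarrow> bool" where
  "mon_path n u v \<longleftrightarrow> u < n \<and> v < n \<and> (v = Suc u \<or> u = Suc v)"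

definition two_coloring :: "nat \<Rightarrow> (nat \<Rightarrow> nat \<Rightarrow> nat) \<Rightarrow> bool" where
  "two_coloring n c \<longleftrightarrow> (\<forall>i j. i < n \<longrightarrow> j < n \<longrightarrow> i \<noteq> j \<longrightarrow>
       c i j = c j i \<and> c i j \<in> {1, 2})"

text \<open>Embedding of graph (m,E) in color col into K_n under c, increasing up to a
  cyclic permutation.\<close>
definition cyc_embedding ::
  "nat \<Rightarrow> (nat \<Rightarrow> nat \<Rightarrow> nat) \<Rightarrow> nat \<Rightarrow> nat \<Rightarrow> (nat \<Rightarrow> nat \<Rightarrow> bool) \<Rightarrow> (nat \<Rightarrow> nat) \<Rightarrow> bool" where
  "cyc_embedding n c col m E \<phi> \<longleftrightarrow>
     (\<forall>u < m. \<phi> u < n) \<and> inj_on \<phi> {0..<m} \<and>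
     (\<forall>u v. E u v \<longrightarrow> c (\<phi> u) (\<phi> v) = col) \<and>
     (\<exists>t < m. \<forall>i j. i < j \<longrightarrow> j < m \<longrightarrow> \<phi> ((t + i) mod m) < \<phi> ((t + j) mod m))"

definition cyc_ramsey_prop ::
  "nat \<Rightarrow> (nat \<Rightarrow> nat \<Rightarrow> bool) \<Rightarrow> nat \<Rightarrow> (nat \<Rightarrow> nat \<Rightarrow> bool) \<Rightarrow> nat \<Rightarrow> bool" where
  "cyc_ramsey_prop m1 E1 m2 E2 n \<longleftrightarrow>
     (\<forall>c. two_coloring n c \<longrightarrow>
        (\<exists>\<phi>. cyc_embedding n c 1 m1 E1 \<phi>) \<or> (\<exists>\<phi>. cyc_embedding n c 2 m2 E2 \<phi>))"

definition R_cyc ::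
  "nat \<Rightarrow> (nat \<Rightarrow> nat \<Rightarrow> bool) \<Rightarrow> nat \<Rightarrow> (nat \<Rightarrow> nat \<Rightarrow> bool) \<Rightarrow> nat" where
  "R_cyc m1 E1 m2 E2 = (LEAST n. cyc_ramsey_prop m1 E1 m2 E2 n)"

end

theory Submission
  imports Defs
begin

lemma zero_fail:
  assumes "a \<ge> 1" "b \<ge> 1"
  shows "\<not> cyc_ramsey_prop a E b (mon_path b) 0"
proof
  assume pr: "cyc_ramsey_prop a E b (mon_path b) 0"
  have "two_coloring 0 (\<lambda>_ _. 1)" unfolding two_coloring_def by auto
  with pr have "(\<exists>\<phi>. cyc_embedding 0 (\<lambda>_ _. 1) 1 a E \<phi>) \<or> (\<exists>\<phi>. cyc_embedding 0 (\<lambda>_ _. 1) 2 b (mon_path b) \<phi>)"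
    unfolding cyc_ramsey_prop_def by blast
  then show False unfolding cyc_embedding_def using assms by force
qed

lemma lower_fail:
  assumes conn: "connected_graph a E" and b: "b \<ge> 1" and n: "n \<le> (a-1)*(b-2)"
  shows "\<not> cyc_ramsey_prop a E b (mon_path b) n"
proof
  assume pr: "cyc_ramsey_prop a E b (mon_path b) n"
  have a: "a \<ge> 1" using conn by (simp add: connected_graph_def)
  define d where "d = a - 1"
  define c where "c i j = (if i div d = j div d then 1::nat else 2)" for i j
  have "two_coloring n c" unfolding two_coloring_def c_def by auto
  with pr have "(\<exists>\<phi>. cyc_embedding n c 1 a E \<phi>) \<or> (\<exists>\<phi>. cyc_embedding n c 2 b (mon_path b) \<phi>)"
    unfolding cyc_ramsey_prop_def by blast
  thus False
  proof
    assume "\<exists>\<phi>. cyc_embedding n c 1 a E \<phi>"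
    then obtain \<phi> where lt: "\<forall>u<a. \<phi> u < n" and inj: "inj_on \<phi> {0..<a}"
      and ed: "\<forall>u v. E u v \<longrightarrow> c (\<phi> u) (\<phi> v) = 1"
      unfolding cyc_embedding_def by blast
    have "n > 0" using lt a by (metis less_nat_zero_code less_one less_le_trans not_gr_zero)
    hence dpos: "d > 0" using n d_def by (metis gr0I mult_is_0 not_less_zero le_zero_eq)
    have same: "E\<^sup>*\<^sup>* 0 u \<Longrightarrow> \<phi> u div d = \<phi> 0 div d" for u
    proof (induction rule: rtranclp_induct)
      case base then show ?case by simp
    next
      case (step y z)
      have "c (\<phi> y) (\<phi> z) = 1" using ed step(2) by blast
      then show ?case using step(3) by (simp add: c_def split: if_splits)
    qed
    have conn2: "u < a \<Longrightarrow> E\<^sup>*\<^sup>* 0 u" for u using conn a by (simp add: connected_graph_def)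
    define B where "B = \<phi> 0 div d"
    have sub: "\<phi> ` {0..<a} \<subseteq> {B*d ..< B*d + d}"
    proof
      fix x assume "x \<in> \<phi> ` {0..<a}"
      then obtain u where u: "u < a" "x = \<phi> u" by auto
      have xd: "x div d = B" using same[OF conn2[OF u(1)]] u B_def by simp
      have "x = x div d * d + x mod d" by simp
      moreover have "x mod d < d" using dpos by simp
      ultimately show "x \<in> {B*d ..< B*d + d}" using xd by (metis atLeastLessThan_iff add_less_cancel_left le_add1)
    qed
    have "card {0..<a} \<le> card {B*d ..< B*d + d}"
      by (rule card_inj_on_le[OF inj sub]) simp
    then show False using a d_def by simp
  next
    assume "\<exists>\<phi>. cyc_embedding n c 2 b (mon_path b) \<phi>"
    then obtain \<phi> t where lt: "\<forall>u<b. \<phi> u < n"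
      and ed: "\<forall>u v. mon_path b u v \<longrightarrow> c (\<phi> u) (\<phi> v) = 2" and t: "t < b"
      and inc: "\<forall>i j. i < j \<longrightarrow> j < b \<longrightarrow> \<phi> ((t + i) mod b) < \<phi> ((t + j) mod b)"
      unfolding cyc_embedding_def by blast
    have "n > 0" using lt b by (metis less_nat_zero_code less_one less_le_trans not_gr_zero)
    hence dpos: "d > 0" and b3: "b \<ge> 3" using n d_def b
      by (metis gr0I mult_is_0 not_less_zero le_zero_eq, 
          metis Suc_1 diff_is_0_eq' eval_nat_numeral(3) le_zero_eq mult_is_0 not_gr_zero not_less_eq_eq)
    define \<psi> where "\<psi> i = \<phi> ((t + i) mod b)" for i
    define e where "e i = (if t + i \<ge> b then 1 else 0::nat)" for i
    have diff: "j + 1 < b \<Longrightarrow> \<phi> j div d \<noteq> \<phi> (Suc j) div d" for j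
    proof -
      assume "j + 1 < b"
      then have "mon_path b j (Suc j)" unfolding mon_path_def by simp
      then have "c (\<phi> j) (\<phi> (Suc j)) = 2" using ed by blast
      then show ?thesis by (simp add: c_def split: if_splits)
    qed
    have key: "i < b \<Longrightarrow> i \<le> \<psi> i div d + e i" for i
    proof (induction i)
      case 0 show ?case by simp
    next
      case (Suc i)
      have IH: "i \<le> \<psi> i div d + e i" using Suc by simp
      have "\<psi> i < \<psi> (Suc i)" using inc Suc(2) unfolding \<psi>_def by blast
      then have mono: "\<psi> i div d \<le> \<psi> (Suc i) div d" by (simp add: div_le_mono)
      consider "t + i = b - 1" | "t + i < b - 1" | "t + i \<ge> b" by linarith
      then show ?case
      proof cases
        case 1
        then have "e i = 0" "e (Suc i) = 1" using b unfolding e_def by auto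
        then show ?thesis using IH mono by simp
      next
        case 2
        then have m1: "(t + i) mod b = t + i" and m2: "(t + Suc i) mod b = Suc (t + i)" by auto
        have "\<psi> i div d \<noteq> \<psi> (Suc i) div d" using diff[of "t+i"] 2 unfolding \<psi>_def m1 m2 by simp
        moreover have "e i = 0" "e (Suc i) = 0" using 2 unfolding e_def by auto
        ultimately show ?thesis using IH mono by simp
      next
        case 3
        have l1: "t + i - b < b" "Suc (t + i) - b < b" using 3 t Suc(2) by linarith+
        have m1: "(t + i) mod b = t + i - b" using 3 l1 by (simp add: le_mod_geq)
        have m2: "(t + Suc i) mod b = Suc (t + i - b)" using 3 l1 by (simp add: le_mod_geq Suc_diff_le)
        have "t + i - b + 1 < b" using 3 t Suc(2) by linarith
        then have "\<psi> i div d \<noteq> \<psi> (Suc i) div d" using diff[of "t+i-b"] unfolding \<psi>_def m1 m2 by simp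
        moreover have "e i = 1" "e (Suc i) = 1" using 3 unfolding e_def by auto
        ultimately show ?thesis using IH mono by simp
      qed
    qed
    have k: "b - 1 \<le> \<psi> (b-1) div d + e (b-1)" using key b by simp
    have "e (b-1) \<le> 1" unfolding e_def by simp
    have "\<psi> (b-1) < n" using lt b t unfolding \<psi>_def by simp
    then have "\<psi> (b-1) < (b-2) * d" using n d_def by (simp add: mult.commute)
    then have "\<psi> (b-1) div d < b - 2" by (rule less_mult_imp_div_less)
    then show False using k \<open>e (b-1) \<le> 1\<close> b3 by linarith
  qed
qed

lemma inc_inj:
  fixes \<psi> :: "nat \<Rightarrow> nat"
  assumes inc: "\<forall>i j. i < j \<longrightarrow> j < k \<longrightarrow> \<psi> i < \<psi> j" and m: "m \<le> k"
  shows "inj_on \<psi> {0..<m}"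
proof (rule inj_onI)
  fix x y assume xy: "x \<in> {0..<m}" "y \<in> {0..<m}" "\<psi> x = \<psi> y"
  show "x = y"
  proof (rule ccontr)
    assume "x \<noteq> y"
    then consider "x < y" | "y < x" by linarith
    then show False
    proof cases
      case 1
      then have "\<psi> x < \<psi> y" using inc xy m by (meson atLeastLessThan_iff less_le_trans)
      then show False using xy by simp
    next
      case 2
      then have "\<psi> y < \<psi> x" using inc xy m by (meson atLeastLessThan_iff less_le_trans)
      then show False using xy by simp
    qed
  qed
qed

lemma upper_emb:
  assumes g: "is_graph a E" and a: "a \<ge> 1" and b: "b \<ge> 1" and n: "n = 1 + (a-1)*(b-1)"
    and col: "two_coloring n c" and nop: "\<not> (\<exists>\<phi>. cyc_embedding n c 2 b (mon_path b) \<phi>)"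
  shows "\<exists>\<phi>. cyc_embedding n c 1 a E \<phi>"
proof -
  have sym: "i < n \<Longrightarrow> j < n \<Longrightarrow> i \<noteq> j \<Longrightarrow> c i j = c j i" for i j
    using col unfolding two_coloring_def by blast
  have rng: "i < n \<Longrightarrow> j < n \<Longrightarrow> i \<noteq> j \<Longrightarrow> c i j = 1 \<or> c i j = 2" for i j
    using col unfolding two_coloring_def by blast
  define P where "P k v \<longleftrightarrow> k \<ge> 1 \<and> (\<exists>\<psi>. (\<forall>i<k. \<psi> i < n) \<and> (\<forall>i j. i < j \<longrightarrow> j < k \<longrightarrow> \<psi> i < \<psi> j)
      \<and> \<psi> (k-1) = v \<and> (\<forall>i. Suc i < k \<longrightarrow> c (\<psi> i) (\<psi> (Suc i)) = 2))" for k v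
  have bnd: "k < b" if "P k v" for k v
  proof (rule ccontr)
    assume nk: "\<not> k < b"
    from that obtain \<psi> where lt: "\<forall>i<k. \<psi> i < n" and inc: "\<forall>i j. i < j \<longrightarrow> j < k \<longrightarrow> \<psi> i < \<psi> j"
      and ed: "\<forall>i. Suc i < k \<longrightarrow> c (\<psi> i) (\<psi> (Suc i)) = 2" unfolding P_def by blast
    have "cyc_embedding n c 2 b (mon_path b) \<psi>"
      unfolding cyc_embedding_def
    proof (intro conjI)
      show "\<forall>u<b. \<psi> u < n" using lt nk by auto
      show "inj_on \<psi> {0..<b}" using inc_inj[OF inc] nk by simp
      show "\<forall>u v. mon_path b u v \<longrightarrow> c (\<psi> u) (\<psi> v) = 2"
      proof (intro allI impI)
        fix u v assume "mon_path b u v"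
        then have uv: "u < b" "v < b" "v = Suc u \<or> u = Suc v" unfolding mon_path_def by auto
        show "c (\<psi> u) (\<psi> v) = 2"
        proof (cases "v = Suc u")
          case True then show ?thesis using ed uv nk by auto
        next
          case False
          then have u: "u = Suc v" using uv by simp
          have "\<psi> v < \<psi> u" using inc u uv nk by auto
          moreover have "\<psi> u < n" "\<psi> v < n" using lt uv nk by auto
          moreover have "c (\<psi> v) (\<psi> u) = 2" using ed u uv nk by auto
          ultimately show ?thesis using sym by (metis less_irrefl)
        qed
      qed
      show "\<exists>t<b. \<forall>i j. i < j \<longrightarrow> j < b \<longrightarrow> \<psi> ((t + i) mod b) < \<psi> ((t + j) mod b)"
        using b inc nk by (intro exI[of _ 0]) auto
    qed
    with nop show False by blast
  qed
  have P1: "P 1 v" if "v < n" for v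
    unfolding P_def using that by (intro conjI exI[of _ "\<lambda>_. v"]) auto
  have ext: "P (Suc k) v" if pk: "P k u" and uv: "u < v" "v < n" "c u v = 2" for k u v
  proof -
    from pk obtain \<psi> where k1: "k \<ge> 1" and lt: "\<forall>i<k. \<psi> i < n" and inc: "\<forall>i j. i < j \<longrightarrow> j < k \<longrightarrow> \<psi> i < \<psi> j"
      and last: "\<psi> (k-1) = u" and ed: "\<forall>i. Suc i < k \<longrightarrow> c (\<psi> i) (\<psi> (Suc i)) = 2" unfolding P_def by blast
    define \<psi>' where "\<psi>' = \<psi>(k := v)"
    have le: "\<psi> i \<le> u" if i: "i < k" for i
    proof (cases "i = k - 1")
      case True then show ?thesis using last by simp
    next
      case False
      then have "i < k - 1" "k - 1 < k" using i k1 by auto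
      then have "\<psi> i < \<psi> (k-1)" using inc by blast
      then show ?thesis using last by simp
    qed
    show ?thesis unfolding P_def
    proof (intro conjI exI[of _ \<psi>'])
      show "1 \<le> Suc k" by simp
      show "\<forall>i<Suc k. \<psi>' i < n" using lt uv unfolding \<psi>'_def by (auto simp: less_Suc_eq)
      show "\<forall>i j. i < j \<longrightarrow> j < Suc k \<longrightarrow> \<psi>' i < \<psi>' j"
      proof (intro allI impI)
        fix i j assume ij: "i < j" "j < Suc k"
        show "\<psi>' i < \<psi>' j"
        proof (cases "j = k")
          case True
          then have "\<psi>' i = \<psi> i" "\<psi>' j = v" "i < k" using ij unfolding \<psi>'_def by auto
          then show ?thesis using le uv by (metis le_less_trans)
        next
          case False
          then have "j < k" using ij by simp
          then show ?thesis using inc ij unfolding \<psi>'_def by auto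
        qed
      qed
      show "\<psi>' (Suc k - 1) = v" unfolding \<psi>'_def by simp
      show "\<forall>i. Suc i < Suc k \<longrightarrow> c (\<psi>' i) (\<psi>' (Suc i)) = 2"
      proof (intro allI impI)
        fix i assume i: "Suc i < Suc k"
        show "c (\<psi>' i) (\<psi>' (Suc i)) = 2"
        proof (cases "Suc i = k")
          case True
          then have "i = k - 1" by simp
          then show ?thesis using True last uv unfolding \<psi>'_def by simp
        next
          case False
          then show ?thesis using i ed unfolding \<psi>'_def by auto
        qed
      qed
    qed
  qed
  define f where "f v = Max {k. P k v}" for v
  have fin: "finite {k. P k v}" for v
    by (rule finite_subset[of _ "{..<b}"]) (auto dest: bnd)
  have fP: "P (f v) v" if "v < n" for v
    unfolding f_def using fin P1[OF that] by (metis (mono_tags) Max_in empty_iff mem_Collect_eq)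
  have fge: "P k v \<Longrightarrow> k \<le> f v" for k v
    unfolding f_def using fin by (simp add: Max_ge)
  have frange: "f v \<in> {1..b-1}" if "v < n" for v
    using fP[OF that] bnd[OF fP[OF that]] unfolding P_def by auto
  have fmono: "f u < f v" if "u < v" "v < n" "c u v = 2" for u v
    using fge[OF ext[OF fP[of u] that]] that by simp
  define F where "F k = {v \<in> {0..<n}. f v = k}" for k
  have "{0..<n} = (\<Union>k\<in>{1..b-1}. F k)" unfolding F_def using frange by auto
  then have "n \<le> (\<Sum>k\<in>{1..b-1}. card (F k))"
    using card_UN_le[of "{1..b-1}" F] by (metis card_atLeastLessThan diff_zero finite_atLeastAtMost)
  have "\<exists>k\<in>{1..b-1}. card (F k) \<ge> a"
  proof (rule ccontr)
    assume na: "\<not> ?thesis"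
    have "card (F k) \<le> a - 1" if "k \<in> {1..b-1}" for k
    proof -
      have "\<not> a \<le> card (F k)" using na that by blast
      then show ?thesis by linarith
    qed
    then have "(\<Sum>k\<in>{1..b-1}. card (F k)) \<le> card {1..b-1} * (a - 1)"
      using sum_bounded_above[of "{1..b-1}" "\<lambda>k. card (F k)" "a-1"] by simp
    then show False using \<open>n \<le> _\<close> n by (simp add: mult.commute)
  qed
  then obtain k where "card (F k) \<ge> a" by blast
  then obtain S where S: "S \<subseteq> F k" "card S = a" "finite S" by (rule obtain_subset_with_card_n)
  define xs where "xs = sorted_list_of_set S"
  have len: "length xs = a" using S unfolding xs_def by simp
  have setxs: "set xs = S" using S unfolding xs_def by simp
  have srt: "sorted_wrt (<) xs" unfolding xs_def by simp
  define \<phi> where "\<phi> i = xs ! i" for i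
  have \<phi>S: "i < a \<Longrightarrow> \<phi> i \<in> S" for i unfolding \<phi>_def using len setxs by auto
  have \<phi>inc: "i < j \<Longrightarrow> j < a \<Longrightarrow> \<phi> i < \<phi> j" for i j
    unfolding \<phi>_def using sorted_wrt_nth_less[OF srt] len by simp
  have \<phi>n: "i < a \<Longrightarrow> \<phi> i < n" for i using \<phi>S S unfolding F_def by auto
  have \<phi>f: "i < a \<Longrightarrow> f (\<phi> i) = k" for i using \<phi>S S unfolding F_def by auto
  have c1: "c (\<phi> i) (\<phi> j) = 1" if "i < a" "j < a" "i < j" for i j
  proof -
    have "\<phi> i < \<phi> j" using \<phi>inc that by simp
    moreover have "c (\<phi> i) (\<phi> j) \<noteq> 2"
      using fmono[of "\<phi> i" "\<phi> j"] \<phi>inc \<phi>n \<phi>f that by fastforce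
    ultimately show ?thesis using rng[of "\<phi> i" "\<phi> j"] \<phi>n that by auto
  qed
  have "cyc_embedding n c 1 a E \<phi>"
    unfolding cyc_embedding_def
  proof (intro conjI)
    show "\<forall>u<a. \<phi> u < n" using \<phi>n by simp
    show "inj_on \<phi> {0..<a}"
      using inc_inj[of a \<phi> a] \<phi>inc by blast
    show "\<forall>u v. E u v \<longrightarrow> c (\<phi> u) (\<phi> v) = 1"
    proof (intro allI impI)
      fix u v assume "E u v"
      then have uv: "u < a" "v < a" "u \<noteq> v" using g unfolding is_graph_def by auto
      show "c (\<phi> u) (\<phi> v) = 1"
      proof (cases "u < v")
        case True then show ?thesis using c1 uv by simp
      next
        case False
        then have "v < u" using uv by simp
        then show ?thesis using c1[of v u] uv sym[of "\<phi> u" "\<phi> v"] \<phi>n \<phi>inc by (metis less_irrefl)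
      qed
    qed
    show "\<exists>t<a. \<forall>i j. i < j \<longrightarrow> j < a \<longrightarrow> \<phi> ((t + i) mod a) < \<phi> ((t + j) mod a)"
      using a \<phi>inc by (intro exI[of _ 0]) auto
  qed
  then show ?thesis by blast
qed

theorem theorem4p5:
  fixes a b :: nat and E :: "nat \<Rightarrow> nat \<Rightarrow> bool"
  assumes "connected_graph a E" and "b \<ge> 1"
  shows "1 + (int a - 1) * (int b - 2) \<le> int (R_cyc a E b (mon_path b))
       \<and> int (R_cyc a E b (mon_path b)) \<le> 1 + (int a - 1) * (int b - 1)"
proof -
  have a: "a \<ge> 1" and g: "is_graph a E" using assms(1) by (auto simp: connected_graph_def)
  define N where "N = 1 + (a-1)*(b-1)"
  have propN: "cyc_ramsey_prop a E b (mon_path b) N"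
    unfolding cyc_ramsey_prop_def using upper_emb[OF g a assms(2) N_def] by blast
  define R where "R = R_cyc a E b (mon_path b)"
  have RN: "R \<le> N" unfolding R_def R_cyc_def by (rule Least_le[where P="cyc_ramsey_prop a E b (mon_path b)", OF propN])
  have propR: "cyc_ramsey_prop a E b (mon_path b) R" unfolding R_def R_cyc_def by (rule LeastI[where P="cyc_ramsey_prop a E b (mon_path b)", OF propN])
  have intN: "int N = 1 + (int a - 1) * (int b - 1)" unfolding N_def using a assms(2) by (simp add: of_nat_diff)
  have low: "1 + (int a - 1) * (int b - 2) \<le> int R"
  proof (rule ccontr)
    assume h: "\<not> ?thesis"
    have "R \<le> (a-1)*(b-2)"
    proof (cases "b \<ge> 2")
      case True
      then have "(int a - 1) * (int b - 2) = int ((a-1)*(b-2))" using a by (simp add: of_nat_diff)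
      then show ?thesis using h by linarith
    next
      case False
      then have "b = 1" using assms(2) by simp
      then show ?thesis using h a by simp
    qed
    then show False using lower_fail[OF assms(1) assms(2)] propR by blast
  qed
  show ?thesis using low RN intN unfolding R_def by simp
qed

end
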